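(* Assume the standing assumptions below and, in addition, that LICQ holds for every subproblem, i.e. $\operatorname{rank}S_i=n_x$ for all $i=0,\dots,p-1$ (so $T_i$ is square and nonsingular). Then the subproblem multipliers of any KKT point of the expanded problem $E$ are uniquely determined and satisfy $$\lambda_{0,i}=\hat\lambda_{i-1},\quad i=0,\dots,p,$$ $$\lambda_{tc,i}=-\hat\lambda_i=-\lambda_{0,i+1},\quad i=0,\dots,p-1,$$ $$\lambda_{N_i,i}=-\lambda_{tc,i}=\lambda_{0,i+1},\quad i=0,\dots,p-1.$$
   Context: Problem $\mathrm{MPC}_N$ ($N\ge2$): variables $x_0,\dots,x_N\in\mathbb R^{n_x}$, $u_t\in\mathbb R^{n_{u,t}}$; minimize $\sum_{t=0}^{N-1}\big(\tfrac12[x_t;u_t]^TH_t[x_t;u_t]+f_t^T[x_t;u_t]+c_t\big)+\tfrac12x_N^TH_Nx_N+f_N^Tx_N+c_N$ s.t. $x_0=\bar x$, $x_{t+1}=A_tx_t+B_tu_t+a_t$. Standing assumptions: $H_t$ symmetric positive semidefinite with lower-right block $H_{u,t}$ positive definite, $H_N$ positive semidefinite, LICQ holds. Splitting: integer $1\le p<N$, $N_0,\dots,N_p\ge1$ with $\sum N_i=N$, $\tau_i=\sum_{j<i}N_j$; block data $A_{t,i}=A_{\tau_i+t}$, etc. (same for $B,a,H,f,c$), $t=0,\dots,N_i-1$, and $H_{N_p,p}=H_N$, $f_{N_p,p}=f_N$, $c_{N_p,p}=c_N$. Products $\prod_{t=t_0}^{t_1}A_t=A_{t_1}\cdots A_{t_0}$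 (empty $=I$). For $i<p$: $\mathcal A_i=\prod_{t=0}^{N_i-1}A_{t,i}$, $D_{j,i}=\prod_{s=j+1}^{N_i-1}A_{s,i}$, $D_i=[D_{0,i}\cdots D_{N_i-1,i}]$, $S_i=[D_{0,i}B_{0,i}\cdots D_{N_i-1,i}B_{N_i-1,i}]$, $\mathbf a_i=(a_{0,i};\dots;a_{N_i-1,i})$, $T_i$ a matrix whose columns form a basis of the range of $S_i$. Expanded problem $E$: variables $x_{t,i},u_{t,i}$ (all blocks $i=0,\dots,p$), $\bar x_0,\dots,\bar x_p$, $\bar d_0,\dots,\bar d_{p-1}$; objective $\sum_{i=0}^p\sum_{t=0}^{N_i-1}\big(\tfrac12[x_{t,i};u_{t,i}]^TH_{t,i}[x_{t,i};u_{t,i}]+f_{t,i}^T[x_{t,i};u_{t,i}]+c_{t,i}\big)+\tfrac12x_{N_p,p}^TH_{N_p,p}x_{N_p,p}+f_{N_p,p}^Tx_{N_p,p}+c_{N_p,p}$; constraints with multipliers: $x_{0,i}=\bar x_i$ ($\lambda_{0,i}$), $x_{t+1,i}=A_{t,i}x_{t,i}+B_{t,i}u_{t,i}+a_{t,i}$ ($\lambda_{t+1,i}$), for $i<p$: $x_{N_i,i}=\mathcal A_i\bar x_i+T_i\bar d_i+D_i\mathbf a_i$ ($\lambda_{tc,i}$); $\bar x_0=\bar x$ ($\hat\lambda_{-1}$); $\bar x_{i+1}=\mathcal A_i\bar x_i+T_i\bar d_i+D_i\mathbf a_i$, $i=0,\dots,p-1$ ($\hat\lambda_i$). Sign convention: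 for each constraint written $\ell=r$ (left side as displayed) with multiplier $\mu$, the Lagrangian is objective $+\sum\mu^T(r-\ell)$ and stationarity is vanishing of its gradient with respect to all variables. *)

theory Defs
  imports "Jordan_Normal_Form.DL_Rank"
begin

fun prodA :: "nat \<Rightarrow> (nat \<Rightarrow> real mat) \<Rightarrow> nat \<Rightarrow> nat \<Rightarrow> real mat" where
  "prodA nx A t0 0 = 1\<^sub>m nx"
| "prodA nx A t0 (Suc k) = A (t0 + k) * prodA nx A t0 k"

definition tau :: "(nat \<Rightarrow> nat) \<Rightarrow> nat \<Rightarrow> nat" where
  "tau Ns i = (\<Sum>j<i. Ns j)"

definition vsum :: "nat \<Rightarrow> real vec list \<Rightarrow> real vec" where
  "vsum nx vs = foldr (+) vs (0\<^sub>v nx)"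

(* \<A>_i = prod_{t=0}^{N_i-1} A_{t,i},  with A_{t,i} = A (tau_i + t) *)
definition calA :: "nat \<Rightarrow> (nat \<Rightarrow> real mat) \<Rightarrow> (nat \<Rightarrow> nat) \<Rightarrow> nat \<Rightarrow> real mat" where
  "calA nx A Ns i = prodA nx A (tau Ns i) (Ns i)"

definition Dji :: "nat \<Rightarrow> (nat \<Rightarrow> real mat) \<Rightarrow> (nat \<Rightarrow> nat) \<Rightarrow> nat \<Rightarrow> nat \<Rightarrow> real mat" where
  "Dji nx A Ns j i = prodA nx A (tau Ns i + j + 1) (Ns i - (j + 1))"

(* S_i = [D_{0,i} B_{0,i}  ...  D_{N_i-1,i} B_{N_i-1,i}]  (horizontal block concatenation) *)
definition Smat :: "nat \<Rightarrow> (nat \<Rightarrow> real mat) \<Rightarrow> (nat \<Rightarrow> real mat) \<Rightarrow> (nat \<Rightarrow> nat) \<Rightarrow> nat \<Rightarrow> real mat" where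
  "Smat nx A B Ns i =
     mat_of_cols nx (concat (map (\<lambda>j. cols (Dji nx A Ns j i * B (tau Ns i + j))) [0..<Ns i]))"

definition Da :: "nat \<Rightarrow> (nat \<Rightarrow> real mat) \<Rightarrow> (nat \<Rightarrow> real vec) \<Rightarrow> (nat \<Rightarrow> nat) \<Rightarrow> nat \<Rightarrow> real vec" where
  "Da nx A a Ns i = vsum nx (map (\<lambda>j. Dji nx A Ns j i *\<^sub>v a (tau Ns i + j)) [0..<Ns i])"

definition mat_range :: "real mat \<Rightarrow> real vec set" where
  "mat_range M = {M *\<^sub>v w | w. w \<in> carrier_vec (dim_col M)}"

definition cols_basis_of_range :: "real mat \<Rightarrow> real mat \<Rightarrow> bool" where
  "cols_basis_of_range T S \<longleftrightarrow>
     dim_row T = dim_row S \<and>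
     (\<forall>w\<in>carrier_vec (dim_col T). T *\<^sub>v w = 0\<^sub>v (dim_row T) \<longrightarrow> w = 0\<^sub>v (dim_col T)) \<and>
     mat_range T = mat_range S"

definition psd :: "nat \<Rightarrow> real mat \<Rightarrow> bool" where
  "psd n M \<longleftrightarrow> M \<in> carrier_mat n n \<and> (\<forall>v\<in>carrier_vec n. v \<bullet> (M *\<^sub>v v) \<ge> 0)"

definition pd :: "nat \<Rightarrow> real mat \<Rightarrow> bool" where
  "pd n M \<longleftrightarrow> M \<in> carrier_mat n n \<and> (\<forall>v\<in>carrier_vec n. v \<noteq> 0\<^sub>v n \<longrightarrow> v \<bullet> (M *\<^sub>v v) > 0)"

definition Huu :: "nat \<Rightarrow> nat \<Rightarrow> real mat \<Rightarrow> real mat" where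
  "Huu nx m M = mat m m (\<lambda>(r, c). M $$ (nx + r, nx + c))"

definition mpc_split_data :: "nat \<Rightarrow> (nat \<Rightarrow> nat) \<Rightarrow> nat \<Rightarrow>
    (nat \<Rightarrow> real mat) \<Rightarrow> (nat \<Rightarrow> real mat) \<Rightarrow> (nat \<Rightarrow> real vec) \<Rightarrow>
    (nat \<Rightarrow> real mat) \<Rightarrow> (nat \<Rightarrow> real vec) \<Rightarrow> real mat \<Rightarrow> real vec \<Rightarrow>
    nat \<Rightarrow> (nat \<Rightarrow> nat) \<Rightarrow> (nat \<Rightarrow> real mat) \<Rightarrow> bool" where
  "mpc_split_data nx nu N A B a H f HN fN p Ns T \<longleftrightarrow>
     N \<ge> 2 \<and> 1 \<le> p \<and> p < N \<and> (\<forall>i\<le>p. Ns i \<ge> 1) \<and> (\<Sum>i\<le>p. Ns i) = N \<and>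
     (\<forall>t<N. A t \<in> carrier_mat nx nx \<and> B t \<in> carrier_mat nx (nu t) \<and> a t \<in> carrier_vec nx \<and>
            H t \<in> carrier_mat (nx + nu t) (nx + nu t) \<and> f t \<in> carrier_vec (nx + nu t) \<and>
            transpose_mat (H t) = H t \<and> psd (nx + nu t) (H t) \<and> pd (nu t) (Huu nx (nu t) (H t))) \<and>
     psd nx HN \<and> fN \<in> carrier_vec nx \<and>
     (\<forall>i<p. T i \<in> carrier_mat nx (dim_col (T i)) \<and> cols_basis_of_range (T i) (Smat nx A B Ns i))"

(* KKT conditions of the expanded problem E (primal feasibility + stationarity of the
   Lagrangian  objective + sum mu^T (r - l)  w.r.t. all variables).
   Variables: x t i = x_{t,i}, u t i = u_{t,i}, xb i = \<bar>x_i, db i = \<bar>d_i;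
   multipliers: lam t i = \<lambda>_{t,i}, ltc i = \<lambda>_{tc,i}, lh j = \<hat>\<lambda>_j (j = -1..p-1). *)
definition KKT_E :: "nat \<Rightarrow> (nat \<Rightarrow> nat) \<Rightarrow>
    (nat \<Rightarrow> real mat) \<Rightarrow> (nat \<Rightarrow> real mat) \<Rightarrow> (nat \<Rightarrow> real vec) \<Rightarrow>
    (nat \<Rightarrow> real mat) \<Rightarrow> (nat \<Rightarrow> real vec) \<Rightarrow> real mat \<Rightarrow> real vec \<Rightarrow>
    nat \<Rightarrow> (nat \<Rightarrow> nat) \<Rightarrow> (nat \<Rightarrow> real mat) \<Rightarrow> real vec \<Rightarrow>
    (nat \<Rightarrow> nat \<Rightarrow> real vec) \<Rightarrow> (nat \<Rightarrow> nat \<Rightarrow> real vec) \<Rightarrow> (nat \<Rightarrow> real vec) \<Rightarrow> (nat \<Rightarrow> real vec) \<Rightarrow>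
    (nat \<Rightarrow> nat \<Rightarrow> real vec) \<Rightarrow> (nat \<Rightarrow> real vec) \<Rightarrow> (int \<Rightarrow> real vec) \<Rightarrow> bool" where
  "KKT_E nx nu A B a H f HN fN p Ns T xbar x u xb db lam ltc lh \<longleftrightarrow>
     \<comment> \<open>dimensions of variables and multipliers\<close>
     (\<forall>i\<le>p. \<forall>t\<le>Ns i. x t i \<in> carrier_vec nx \<and> lam t i \<in> carrier_vec nx) \<and>
     (\<forall>i\<le>p. \<forall>t<Ns i. u t i \<in> carrier_vec (nu (tau Ns i + t))) \<and>
     (\<forall>i\<le>p. xb i \<in> carrier_vec nx) \<and>
     (\<forall>i<p. db i \<in> carrier_vec (dim_col (T i)) \<and> ltc i \<in> carrier_vec nx) \<and>
     (\<forall>j::int. -1 \<le> j \<and> j \<le> int p - 1 \<longrightarrow> lh j \<in> carrier_vec nx) \<and>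
     \<comment> \<open>primal feasibility\<close>
     (\<forall>i\<le>p. x 0 i = xb i) \<and>
     (\<forall>i\<le>p. \<forall>t<Ns i. x (Suc t) i =
         A (tau Ns i + t) *\<^sub>v x t i + B (tau Ns i + t) *\<^sub>v u t i + a (tau Ns i + t)) \<and>
     (\<forall>i<p. x (Ns i) i = calA nx A Ns i *\<^sub>v xb i + T i *\<^sub>v db i + Da nx A a Ns i) \<and>
     xb 0 = xbar \<and>
     (\<forall>i<p. xb (Suc i) = calA nx A Ns i *\<^sub>v xb i + T i *\<^sub>v db i + Da nx A a Ns i) \<and>
     \<comment> \<open>stationarity w.r.t. x_{t,i} and u_{t,i}, t < N_i\<close>
     (\<forall>i\<le>p. \<forall>t<Ns i.
        (let k = tau Ns i + t; g = H k *\<^sub>v (x t i @\<^sub>v u t i) + f k in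
          vec nx (\<lambda>r. g $ r) + transpose_mat (A k) *\<^sub>v lam (Suc t) i - lam t i = 0\<^sub>v nx \<and>
          vec (nu k) (\<lambda>r. g $ (nx + r)) + transpose_mat (B k) *\<^sub>v lam (Suc t) i = 0\<^sub>v (nu k))) \<and>
     \<comment> \<open>stationarity w.r.t. x_{N_i,i}\<close>
     (\<forall>i<p. - lam (Ns i) i - ltc i = 0\<^sub>v nx) \<and>
     HN *\<^sub>v x (Ns p) p + fN - lam (Ns p) p = 0\<^sub>v nx \<and>
     \<comment> \<open>stationarity w.r.t. \<bar>x_i\<close>
     (\<forall>i<p. lam 0 i - lh (int i - 1) + transpose_mat (calA nx A Ns i) *\<^sub>v (ltc i + lh (int i)) = 0\<^sub>v nx) \<and>
     lam 0 p - lh (int p - 1) = 0\<^sub>v nx \<and>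
     \<comment> \<open>stationarity w.r.t. \<bar>d_i\<close>
     (\<forall>i<p. transpose_mat (T i) *\<^sub>v (ltc i + lh (int i)) = 0\<^sub>v (dim_col (T i)))"

end

theory Submission imports Defs begin

lemma (in vec_space) full_rank_range:
  assumes A: "A \<in> carrier_mat n nc" and r: "rank A = n" and y: "y \<in> carrier_vec n"
  shows "\<exists>w\<in>carrier_vec nc. y = A *\<^sub>v w"
proof -
  have li0: "lin_indpt {}"
    unfolding lin_dep_def by auto
  obtain U where U: "finite U" "maximal U (\<lambda>T. T \<subseteq> set (cols A) \<and> lin_indpt T)"
    using maximal_exists_superset[of "set (cols A)" "(\<lambda>T. T \<subseteq> set (cols A) \<and> lin_indpt T)" "{}"] li0
    by auto
  have cardU: "card U = n" using rank_card_indpt[OF A U(2)] r by simp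
  have colsC: "set (cols A) \<subseteq> carrier_vec n" using A cols_dim by blast
  have UA: "U \<subseteq> set (cols A)" "lin_indpt U" using U(2) unfolding maximal_def by auto
  have UC: "U \<subseteq> carrier_vec n" using UA colsC by auto
  have "basis U" using dim_li_is_basis[OF fin_dim U(1) UC UA(2)] cardU dim_is_n by simp
  hence "span U = carrier V" unfolding basis_def by auto
  moreover have "span U \<subseteq> span (set (cols A))" using span_is_monotone[OF UA(1)] .
  ultimately have "y \<in> span (set (cols A))" using y by auto
  hence "y \<in> span_list (cols A)" using span_list_as_span[OF colsC[simplified]] by simp
  then obtain c where c: "y = lincomb_list c (cols A)" by (auto elim: in_span_listE)
  have "lincomb_list c (cols A) = mat_of_cols n (cols A) *\<^sub>v vec (length (cols A)) c"
    by (rule lincomb_list_as_mat_mult) (use colsC in auto)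
  also have "\<dots> = A *\<^sub>v vec nc c" using A mat_of_cols_cols[of A] by auto
  finally show ?thesis using c by auto
qed

lemma real_vec_self_zero:
  fixes v :: "real vec"
  assumes "v \<in> carrier_vec n" "v \<bullet> v = 0" shows "v = 0\<^sub>v n"
proof (rule eq_vecI)
  have "(\<Sum>j<n. v $ j * v $ j) = 0" using assms unfolding scalar_prod_def
    by (simp add: lessThan_atLeast0)
  hence "\<forall>j\<in>{..<n}. v $ j * v $ j = 0" by (subst sum_nonneg_eq_0_iff[symmetric]) auto
  thus "\<And>j. j < dim_vec (0\<^sub>v n) \<Longrightarrow> v $ j = 0\<^sub>v n $ j" by auto
  show "dim_vec v = dim_vec (0\<^sub>v n)" using assms by simp
qed

lemma key_inj:
  assumes T: "T \<in> carrier_mat nx k" and S: "S \<in> carrier_mat nx m"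
    and rng: "mat_range T = mat_range S" and r: "vec_space.rank nx S = nx"
    and v: "(v::real vec) \<in> carrier_vec nx" and z: "transpose_mat T *\<^sub>v v = 0\<^sub>v k"
  shows "v = 0\<^sub>v nx"
proof -
  obtain w where w: "w \<in> carrier_vec m" "v = S *\<^sub>v w"
    using vec_space.full_rank_range[OF S r v] by auto
  have "v \<in> mat_range S" unfolding mat_range_def using w S by auto
  hence "v \<in> mat_range T" using rng by simp
  then obtain w' where w': "w' \<in> carrier_vec k" "v = T *\<^sub>v w'"
    unfolding mat_range_def using T by auto
  have "v \<bullet> v = (transpose_mat T *\<^sub>v v) \<bullet> w'"
    using transpose_vec_mult_scalar[OF T w'(1) v] w'(2) by simp
  also have "\<dots> = 0" using z w' by simp
  finally show ?thesis using real_vec_self_zero v by blast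
qed

lemma vec_eq_of_diff:
  fixes a b X :: "real vec"
  assumes "a \<in> carrier_vec n" "b \<in> carrier_vec n" "X - a = 0\<^sub>v n" "X - b = 0\<^sub>v n"
  shows "a = b"
proof (rule eq_vecI)
  fix j assume j: "j < dim_vec b"
  have "(X - a) $ j = 0\<^sub>v n $ j" "(X - b) $ j = 0\<^sub>v n $ j" by (simp only: assms(3,4))+
  moreover have "0\<^sub>v n $ j = (0::real)" using assms j by auto
  moreover have "(X - a) $ j = X $ j - a $ j" "(X - b) $ j = X $ j - b $ j" using assms(1,2) j by auto
  ultimately show "a $ j = b $ j" by linarith
qed (use assms in auto)

lemma vec_eq_neg:
  fixes a b :: "real vec"
  assumes "a \<in> carrier_vec n" "b \<in> carrier_vec n" "- a - b = 0\<^sub>v n"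
  shows "b = - a"
proof (rule eq_vecI)
  fix j assume j: "j < dim_vec (-a)"
  have "(- a - b) $ j = 0\<^sub>v n $ j" by (simp only: assms(3))
  moreover have "0\<^sub>v n $ j = (0::real)" using assms j by auto
  moreover have "(- a - b) $ j = - (a $ j) - b $ j" "(-a) $ j = - (a $ j)" using assms(1,2) j by auto
  ultimately show "b $ j = (-a) $ j" by linarith
qed (use assms in auto)

lemma vec_eq_neg2:
  fixes a b :: "real vec"
  assumes "a \<in> carrier_vec n" "b \<in> carrier_vec n" "a + b = 0\<^sub>v n"
  shows "a = - b"
proof (rule eq_vecI)
  fix j assume j: "j < dim_vec (-b)"
  have "(a + b) $ j = 0\<^sub>v n $ j" by (simp only: assms(3))
  moreover have "0\<^sub>v n $ j = (0::real)" using assms j by auto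
  moreover have "(a + b) $ j = a $ j + b $ j" "(-b) $ j = - (b $ j)" using assms(1,2) j by auto
  ultimately show "a $ j = (-b) $ j" by linarith
qed (use assms in auto)

lemma vec_eq_diff0:
  fixes a b :: "real vec"
  assumes "a \<in> carrier_vec n" "b \<in> carrier_vec n" "a - b + c = 0\<^sub>v n" "c = 0\<^sub>v n"
  shows "a = b"
proof (rule eq_vecI)
  fix j assume j: "j < dim_vec b"
  have "(a - b + c) $ j = 0\<^sub>v n $ j" by (simp only: assms(3))
  moreover have "0\<^sub>v n $ j = (0::real)" using assms j by auto
  moreover have "c $ j = 0" using assms j by auto
  moreover have "(a - b + c) $ j = a $ j - b $ j + c $ j" using assms(1,2,4) j by auto
  ultimately show "a $ j = b $ j" by linarith
qed (use assms in auto)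

lemma mat_vec_zero: "M *\<^sub>v 0\<^sub>v n = (0\<^sub>v (dim_row M) :: real vec)"
  by (intro eq_vecI) (auto simp: mult_mat_vec_def scalar_prod_def)

lemma dim_col_prodA: "dim_col (prodA nx A t0 k) = nx"
  by (induction k) auto

lemma kkt_rel:
  assumes data: "mpc_split_data nx nu N A B a H f HN fN p Ns T"
    and licq_sub: "\<forall>i<p. vec_space.rank nx (Smat nx A B Ns i) = nx"
    and kkt: "KKT_E nx nu A B a H f HN fN p Ns T xbar x u xb db lam ltc lh"
  shows "(\<forall>i<p. ltc i = - lh (int i)) \<and> (\<forall>i\<le>p. lam 0 i = lh (int i - 1))
     \<and> (\<forall>i<p. lam (Ns i) i = - ltc i) \<and> (\<forall>i<p. lam (Ns i) i = lam 0 (Suc i))"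
proof -
  have K1: "\<forall>i\<le>p. \<forall>t\<le>Ns i. x t i \<in> carrier_vec nx \<and> lam t i \<in> carrier_vec nx"
    using kkt unfolding KKT_E_def by (elim conjE) assumption
  have K4: "\<forall>i<p. db i \<in> carrier_vec (dim_col (T i)) \<and> ltc i \<in> carrier_vec nx"
    using kkt unfolding KKT_E_def by (elim conjE) assumption
  have K5: "\<forall>j::int. -1 \<le> j \<and> j \<le> int p - 1 \<longrightarrow> lh j \<in> carrier_vec nx"
    using kkt unfolding KKT_E_def by (elim conjE) assumption
  have K12: "\<forall>i<p. - lam (Ns i) i - ltc i = 0\<^sub>v nx"
    using kkt unfolding KKT_E_def by (elim conjE) assumption
  have K14: "\<forall>i<p. lam 0 i - lh (int i - 1) + transpose_mat (calA nx A Ns i) *\<^sub>v (ltc i + lh (int i)) = 0\<^sub>v nx"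
    using kkt unfolding KKT_E_def by (elim conjE) assumption
  have K15: "lam 0 p - lh (int p - 1) = 0\<^sub>v nx"
    using kkt unfolding KKT_E_def by (elim conjE) assumption
  have K16: "\<forall>i<p. transpose_mat (T i) *\<^sub>v (ltc i + lh (int i)) = 0\<^sub>v (dim_col (T i))"
    using kkt unfolding KKT_E_def by (elim conjE) assumption
  have lhC: "\<And>j. -1 \<le> j \<Longrightarrow> j \<le> int p - 1 \<Longrightarrow> lh j \<in> carrier_vec nx"
    using K5 by blast
  have lamC: "\<And>i t. i \<le> p \<Longrightarrow> t \<le> Ns i \<Longrightarrow> lam t i \<in> carrier_vec nx"
    using K1 by blast
  have ltcC: "\<And>i. i < p \<Longrightarrow> ltc i \<in> carrier_vec nx"
    using K4 by blast
  have A1: "\<forall>i<p. ltc i = - lh (int i)"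
  proof (intro allI impI)
    fix i assume i: "i < p"
    have TC: "T i \<in> carrier_mat nx (dim_col (T i))" and cb: "cols_basis_of_range (T i) (Smat nx A B Ns i)"
      using data i unfolding mpc_split_data_def by auto
    have SC: "Smat nx A B Ns i \<in> carrier_mat nx (dim_col (Smat nx A B Ns i))"
      unfolding Smat_def by auto
    have lhi: "lh (int i) \<in> carrier_vec nx" using lhC[of "int i"] i by auto
    have v: "ltc i + lh (int i) \<in> carrier_vec nx" using ltcC[OF i] lhi by auto
    have rng: "mat_range (T i) = mat_range (Smat nx A B Ns i)"
      using cb unfolding cols_basis_of_range_def by blast
    have "ltc i + lh (int i) = 0\<^sub>v nx"
      by (rule key_inj[OF TC SC rng licq_sub[rule_format, OF i] v K16[rule_format, OF i]])
    thus "ltc i = - lh (int i)" using vec_eq_neg2 ltcC[OF i] lhi by blast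
  qed
  have A2: "\<forall>i\<le>p. lam 0 i = lh (int i - 1)"
  proof (intro allI impI)
    fix i assume i: "i \<le> p"
    have lhm: "lh (int i - 1) \<in> carrier_vec nx" using lhC[of "int i - 1"] i by auto
    have l0: "lam 0 i \<in> carrier_vec nx" using lamC[OF i] by simp
    show "lam 0 i = lh (int i - 1)"
    proof (cases "i < p")
      case True
      have e: "lam 0 i - lh (int i - 1) + transpose_mat (calA nx A Ns i) *\<^sub>v (ltc i + lh (int i)) = 0\<^sub>v nx"
        using K14 True by blast
      have lhi: "lh (int i) \<in> carrier_vec nx" using lhC[of "int i"] True by auto
      have z: "ltc i + lh (int i) = 0\<^sub>v nx"
        using A1 True ltcC[OF True] lhi by auto
      have "transpose_mat (calA nx A Ns i) *\<^sub>v (ltc i + lh (int i)) = 0\<^sub>v nx"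
        unfolding z using mat_vec_zero[of "transpose_mat (calA nx A Ns i)" nx] by (simp add: calA_def dim_col_prodA)
      thus ?thesis using vec_eq_diff0[OF l0 lhm e] by blast
    next
      case False
      hence ip: "i = p" using i by auto
      have e: "lam 0 i - lh (int i - 1) + 0\<^sub>v nx = 0\<^sub>v nx"
        using K15 l0 lhm ip by simp
      show ?thesis using vec_eq_diff0[OF l0 lhm e] by blast
    qed
  qed
  have A3: "\<forall>i<p. lam (Ns i) i = - ltc i"
  proof (intro allI impI)
    fix i assume i: "i < p"
    have lN: "lam (Ns i) i \<in> carrier_vec nx" using lamC[of i "Ns i"] i by auto
    from vec_eq_neg[OF lN ltcC[OF i] K12[rule_format, OF i]]
    have "ltc i = - lam (Ns i) i" .
    thus "lam (Ns i) i = - ltc i" using lN by auto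
  qed
  have A4: "\<forall>i<p. lam (Ns i) i = lam 0 (Suc i)"
  proof (intro allI impI)
    fix i assume i: "i < p"
    have "lam (Ns i) i = - (- lh (int i))" using A1 A3 i by simp
    also have "\<dots> = lh (int (Suc i) - 1)" by simp
    also have "\<dots> = lam 0 (Suc i)" using A2 i by simp
    finally show "lam (Ns i) i = lam 0 (Suc i)" .
  qed
  show ?thesis using A1 A2 A3 A4 by blast
qed


lemma stat_eq:
  assumes kkt: "KKT_E nx nu A B a H f HN fN p Ns T xbar x u xb db lam ltc lh"
    and kkt': "KKT_E nx nu A B a H f HN fN p Ns T xbar x u xb db lam' ltc' lh'"
    and i: "i \<le> p" and t: "t < Ns i" and e: "lam' (Suc t) i = lam (Suc t) i"
  shows "lam' t i = lam t i"
proof -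
  have K1: "\<forall>i\<le>p. \<forall>t\<le>Ns i. x t i \<in> carrier_vec nx \<and> lam t i \<in> carrier_vec nx"
    using kkt unfolding KKT_E_def by (elim conjE) assumption
  have K1': "\<forall>i\<le>p. \<forall>t\<le>Ns i. x t i \<in> carrier_vec nx \<and> lam' t i \<in> carrier_vec nx"
    using kkt' unfolding KKT_E_def by (elim conjE) assumption
  have K11: "\<forall>i\<le>p. \<forall>t<Ns i.
        (let k = tau Ns i + t; g = H k *\<^sub>v (x t i @\<^sub>v u t i) + f k in
          vec nx (\<lambda>r. g $ r) + transpose_mat (A k) *\<^sub>v lam (Suc t) i - lam t i = 0\<^sub>v nx \<and>
          vec (nu k) (\<lambda>r. g $ (nx + r)) + transpose_mat (B k) *\<^sub>v lam (Suc t) i = 0\<^sub>v (nu k))"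
    using kkt unfolding KKT_E_def by (elim conjE) assumption
  have K11': "\<forall>i\<le>p. \<forall>t<Ns i.
        (let k = tau Ns i + t; g = H k *\<^sub>v (x t i @\<^sub>v u t i) + f k in
          vec nx (\<lambda>r. g $ r) + transpose_mat (A k) *\<^sub>v lam' (Suc t) i - lam' t i = 0\<^sub>v nx \<and>
          vec (nu k) (\<lambda>r. g $ (nx + r)) + transpose_mat (B k) *\<^sub>v lam' (Suc t) i = 0\<^sub>v (nu k))"
    using kkt' unfolding KKT_E_def by (elim conjE) assumption
  let ?k = "tau Ns i + t"
  let ?g = "H ?k *\<^sub>v (x t i @\<^sub>v u t i) + f ?k"
  let ?X = "vec nx (\<lambda>r. ?g $ r) + transpose_mat (A ?k) *\<^sub>v lam (Suc t) i"
  have h1: "?X - lam t i = 0\<^sub>v nx" using K11[rule_format, OF i t] unfolding Let_def by blast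
  have h2: "?X - lam' t i = 0\<^sub>v nx" using K11'[rule_format, OF i t] e unfolding Let_def by simp
  show ?thesis
    by (rule vec_eq_of_diff[OF _ _ h2 h1]) (use K1 K1' i t in auto)
qed

lemma block_eq:
  assumes kkt: "KKT_E nx nu A B a H f HN fN p Ns T xbar x u xb db lam ltc lh"
    and kkt': "KKT_E nx nu A B a H f HN fN p Ns T xbar x u xb db lam' ltc' lh'"
    and i: "i \<le> p" and e: "lam' (Ns i) i = lam (Ns i) i"
  shows "\<forall>t\<le>Ns i. lam' t i = lam t i"
proof -
  have "\<forall>t. t \<le> Ns i \<longrightarrow> Ns i - t \<le> k \<longrightarrow> lam' t i = lam t i" for k
  proof (induction k)
    case 0
    then show ?case using e by auto
  next
    case (Suc k)
    show ?case
    proof (intro allI impI)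
      fix t assume t: "t \<le> Ns i" "Ns i - t \<le> Suc k"
      show "lam' t i = lam t i"
      proof (cases "Ns i - t \<le> k")
        case True thus ?thesis using Suc.IH t by blast
      next
        case False
        hence tl: "t < Ns i" "Ns i - Suc t \<le> k" using t by auto
        hence "lam' (Suc t) i = lam (Suc t) i" using Suc.IH by auto
        thus ?thesis using stat_eq[OF kkt kkt' i tl(1)] by blast
      qed
    qed
  qed
  thus ?thesis by blast
qed

theorem corollary1:
  assumes data: "mpc_split_data nx nu N A B a H f HN fN p Ns T"
    and xbar: "xbar \<in> carrier_vec nx"
    and licq_sub: "\<forall>i<p. vec_space.rank nx (Smat nx A B Ns i) = nx"
    and kkt: "KKT_E nx nu A B a H f HN fN p Ns T xbar x u xb db lam ltc lh"
  shows "(\<forall>lam' ltc' lh'. KKT_E nx nu A B a H f HN fN p Ns T xbar x u xb db lam' ltc' lh' \<longrightarrow>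
            (\<forall>i\<le>p. \<forall>t\<le>Ns i. lam' t i = lam t i) \<and> (\<forall>i<p. ltc' i = ltc i))
       \<and> (\<forall>i\<le>p. lam 0 i = lh (int i - 1))
       \<and> (\<forall>i<p. ltc i = - lh (int i) \<and> - lh (int i) = - lam 0 (Suc i))
       \<and> (\<forall>i<p. lam (Ns i) i = - ltc i \<and> - ltc i = lam 0 (Suc i))"
proof -
  note R = kkt_rel[OF data licq_sub kkt]
  have U: "(\<forall>i\<le>p. \<forall>t\<le>Ns i. lam' t i = lam t i) \<and> (\<forall>i<p. ltc' i = ltc i)"
    if kkt': "KKT_E nx nu A B a H f HN fN p Ns T xbar x u xb db lam' ltc' lh'" for lam' ltc' lh'
  proof -
    note R' = kkt_rel[OF data licq_sub kkt']
    have K1: "\<forall>i\<le>p. \<forall>t\<le>Ns i. x t i \<in> carrier_vec nx \<and> lam t i \<in> carrier_vec nx"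
      using kkt unfolding KKT_E_def by (elim conjE) assumption
    have K1': "\<forall>i\<le>p. \<forall>t\<le>Ns i. x t i \<in> carrier_vec nx \<and> lam' t i \<in> carrier_vec nx"
      using kkt' unfolding KKT_E_def by (elim conjE) assumption
    have K13: "HN *\<^sub>v x (Ns p) p + fN - lam (Ns p) p = 0\<^sub>v nx"
      using kkt unfolding KKT_E_def by (elim conjE) assumption
    have K13': "HN *\<^sub>v x (Ns p) p + fN - lam' (Ns p) p = 0\<^sub>v nx"
      using kkt' unfolding KKT_E_def by (elim conjE) assumption
    have eNp: "lam' (Ns p) p = lam (Ns p) p"
      by (rule vec_eq_of_diff[OF _ _ K13' K13]) (use K1 K1' in auto)
    have "\<forall>i. i \<le> p \<longrightarrow> p - i \<le> k \<longrightarrow> (\<forall>t\<le>Ns i. lam' t i = lam t i)" for k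
    proof (induction k)
      case 0
      show ?case using block_eq[OF kkt kkt' _ eNp] by auto
    next
      case (Suc k)
      show ?case
      proof (rule allI, rule impI, rule impI)
        fix i assume i: "i \<le> p" "p - i \<le> Suc k"
        show "\<forall>t\<le>Ns i. lam' t i = lam t i"
        proof (cases "p - i \<le> k")
          case True thus ?thesis using Suc.IH i by blast
        next
          case False
          hence ip: "i < p" "p - Suc i \<le> k" using i by auto
          have "lam' 0 (Suc i) = lam 0 (Suc i)" using Suc.IH ip by auto
          hence "lam' (Ns i) i = lam (Ns i) i" using R R' ip(1) by auto
          thus ?thesis using block_eq[OF kkt kkt' i(1)] by blast
        qed
      qed
    qed
    hence L: "\<forall>i\<le>p. \<forall>t\<le>Ns i. lam' t i = lam t i" by blast
    have "\<forall>i<p. ltc' i = ltc i"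
    proof (intro allI impI)
      fix i assume i: "i < p"
      have "ltc' i = - (- ltc' i)" by simp
      also have "\<dots> = - lam' (Ns i) i" using R' i by auto
      also have "\<dots> = - lam (Ns i) i" using L i by auto
      also have "\<dots> = ltc i" using R i by auto
      finally show "ltc' i = ltc i" .
    qed
    with L show ?thesis by blast
  qed
  have C3: "\<forall>i<p. ltc i = - lh (int i) \<and> - lh (int i) = - lam 0 (Suc i)"
  proof (intro allI impI)
    fix i assume i: "i < p"
    have "lam 0 (Suc i) = lh (int (Suc i) - 1)" using R i by auto
    hence "- lh (int i) = - lam 0 (Suc i)" by simp
    moreover have "ltc i = - lh (int i)" using R i by auto
    ultimately show "ltc i = - lh (int i) \<and> - lh (int i) = - lam 0 (Suc i)" by blast
  qed
  have C4: "\<forall>i<p. lam (Ns i) i = - ltc i \<and> - ltc i = lam 0 (Suc i)"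
    using R by auto
  show ?thesis using U C3 C4 R by blast
qed

end
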